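(* For every integer $n\ge 0$, $$x\prod_{i=0}^{n}\bigl(1+tx^{2^{i}}+x^{2^{i+1}}\bigr)=\sum_{i=1}^{2^{n+1}}\Bigl(B_i(t)+B_{2^{n+1}-i}(t)\,x^{2^{n+1}}\Bigr)x^{i}$$ as an identity in $\mathbb{Z}[t,x]$.
   Context: The Stern polynomials $B_n(t)\in\mathbb{Z}[t]$, $n\ge 0$, are defined by $B_0(t)=0$, $B_1(t)=1$, $B_{2n}(t)=tB_n(t)$ and $B_{2n+1}(t)=B_n(t)+B_{n+1}(t)$ for $n\ge 1$. *)

theory Defs
  imports "HOL-Computational_Algebra.Polynomial"
begin

function stern_poly :: "nat \<Rightarrow> int poly" where
  "stern_poly n =
     (if n = 0 then 0
      else if n = 1 then 1
      else if even n then [:0, 1:] * stern_poly (n div 2)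
      else stern_poly (n div 2) + stern_poly (n div 2 + 1))"
  by auto
termination
  by (relation "measure id") (auto elim!: oddE)

text \<open>Z[t,x] is represented as (Z[t])[x], i.e. int poly poly:
  the outer variable is x, the inner variable is t.\<close>

definition var_x :: "int poly poly" where
  "var_x = [:0, 1:]"

definition var_t :: "int poly poly" where
  "var_t = [:[:0, 1:]:]"

end

theory Submission
  imports Defs
begin

declare stern_poly.simps [simp del]

lemma B0: "stern_poly 0 = 0" by (simp add: stern_poly.simps)
lemma B1: "stern_poly 1 = 1" by (simp add: stern_poly.simps)
lemma B1s: "stern_poly (Suc 0) = 1" by (metis B1 One_nat_def)
lemma Beven: "stern_poly (2*m) = [:0,1:] * stern_poly m"
  by (cases "m = 0") (simp_all add: B0 stern_poly.simps[of "2*m"])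
lemma Bodd: "stern_poly (2*m+1) = stern_poly m + stern_poly (m+1)"
proof (cases "m = 0")
  case True then show ?thesis by (simp add: B0 B1)
next
  case False
  have "stern_poly (2*m+1) = stern_poly ((2*m+1) div 2) + stern_poly ((2*m+1) div 2 + 1)"
    using False by (subst stern_poly.simps) simp
  moreover have "(2*m+1) div 2 = m" by simp
  ultimately show ?thesis by simp
qed

definition cc :: "nat \<Rightarrow> nat \<Rightarrow> int poly" where
  "cc M j = stern_poly (min j (2*M - j))"

lemma cc_even: "cc (2*M) (2*m) = [:0,1:] * cc M m"
proof -
  have "min (2*m) (2*(2*M) - 2*m) = 2 * min m (2*M - m)" by simp
  thus ?thesis by (simp add: cc_def Beven)
qed

lemma cc_odd: "cc (2*M) (2*k+1) = cc M k + cc M (k+1)"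
proof (cases "k < M")
  case True
  then have "min (2*k+1) (2*(2*M) - (2*k+1)) = 2*k+1" "min k (2*M-k) = k"
    "min (k+1) (2*M-(k+1)) = k+1" by auto
  thus ?thesis using Bodd[of k] by (simp add: cc_def)
next
  case False
  show ?thesis
  proof (cases "k < 2*M")
    case True
    with False have "min (2*k+1) (2*(2*M) - (2*k+1)) = 2*(2*M-k-1)+1" "min k (2*M-k) = 2*M-k"
      "min (k+1) (2*M-(k+1)) = 2*M-k-1" "2*M-k-1+1 = 2*M-k" by auto
    thus ?thesis using Bodd[of "2*M-k-1"] by (simp add: cc_def add.commute)
  next
    case False
    then have "min (2*k+1) (2*(2*M) - (2*k+1)) = 0" "min k (2*M-k) = 0"
      "min (k+1) (2*M-(k+1)) = 0" by auto
    thus ?thesis by (simp add: cc_def B0)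
  qed
qed

lemma cc_0: "cc M 0 = 0" by (simp add: cc_def B0)
lemma cc_2M: "cc M (2*M) = 0" by (simp add: cc_def B0)

lemma sum_even_odd: "(\<Sum>j<2*(L::nat). g j) = (\<Sum>k<L. g (2*k)) + (\<Sum>k<L. (g (2*k+1)::'a::comm_monoid_add))"
  by (induction L) (simp_all add: algebra_simps)

lemma sum_add_split: "(\<Sum>j<a+(b::nat). g j) = (\<Sum>j<a. g j) + (\<Sum>j<b. (g (a+j)::'a::comm_monoid_add))"
  by (induction b) (simp_all add: algebra_simps)

lemma sum_1_shift: "(\<Sum>i=1..(M::nat). g i) = (\<Sum>j<M. (g (Suc j)::'a::comm_monoid_add))"
  by (induction M) simp_all

definition ff :: "int poly poly \<Rightarrow> nat \<Rightarrow> int poly poly" where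
  "ff y i = 1 + var_t * y ^ (2 ^ i) + y ^ (2 ^ (i + 1))"

lemma vt: "var_t * [:p:] = [:[:0,1:] * p:]"
  by (simp add: var_t_def)

lemma vt2: "[:[:0,1:] * p:] * z = [:p:] * (var_t * z)"
proof -
  have "[:[:0,1:] * p:] = [:p:] * var_t" by (simp add: var_t_def mult.commute)
  thus ?thesis by (simp add: mult.assoc)
qed

lemma main: "(\<Prod>i = 0..n. ff y i) = (\<Sum>j<2*2^(n+1). [:cc (2^(n+1)) (j+1):] * y ^ j)"
proof (induction n arbitrary: y)
  case 0
  have "cc 2 1 = 1" "cc 2 2 = [:0,1:]" "cc 2 3 = 1" "cc 2 4 = 0"
  proof -
    have b2: "stern_poly 2 = [:0,1:]" using Beven[of 1] by (simp add: B1s one_pCons)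
    show "cc 2 1 = 1" by (simp add: cc_def B1s)
    show "cc 2 2 = [:0,1:]" by (simp add: cc_def b2)
    show "cc 2 3 = 1" by (simp add: cc_def B1s)
    show "cc 2 4 = 0" by (simp add: cc_def B0)
  qed
  then have cs: "[:cc 2 1:] = 1" "[:cc 2 2:] = var_t" "[:cc 2 3:] = 1" "[:cc 2 4:] = 0"
    by (simp_all add: var_t_def one_pCons)
  have s4: "\<And>g. (\<Sum>j<(4::nat). g j) = g 0 + g 1 + g 2 + (g 3 :: int poly poly)"
    by (simp add: numeral_eq_Suc)
  have "(\<Sum>j<2*2^(0+1). [:cc (2^(0+1)) (j+1):] * y ^ j) = (\<Sum>j<4. [:cc 2 (j+1):] * y ^ j)"
    by simp
  also have "\<dots> = 1 + var_t * y + y^2"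
  proof -
    have a: "(0::nat)+1 = 1" "(1::nat)+1=2" "(2::nat)+1=3" "(3::nat)+1=4" by simp_all
    show ?thesis
      using s4[of "\<lambda>j. [:cc 2 (j+1):] * y^j"]
      by (simp only: a cs power_0 power_one_right mult_1_left mult_1_right mult_zero_left add_0_right)
  qed
  finally show ?case by (simp add: ff_def)
next
  case (Suc n)
  define M :: nat where "M = 2^(n+1)"
  define c where "c = cc M"
  have M2: "2^(Suc n + 1) = 2*M" by (simp add: M_def)
  have "(\<Prod>i = 0..Suc n. ff y i) = ff y 0 * (\<Prod>i = 0..n. ff y (Suc i))"
    by (simp only: prod.atLeast0_atMost_Suc_shift comp_def)
  also have "(\<Prod>i = 0..n. ff y (Suc i)) = (\<Prod>i = 0..n. ff (y^2) i)"
    by (simp add: ff_def power_mult[symmetric] mult.commute)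
  also have "\<dots> = (\<Sum>k<2*M. [:c (k+1):] * y ^ (2*k))"
    using Suc.IH[of "y^2"] by (simp add: M_def c_def power_mult)
  finally have L: "(\<Prod>i = 0..Suc n. ff y i) = (1 + var_t * y + y^2) * (\<Sum>k<2*M. [:c (k+1):] * y ^ (2*k))"
    by (simp add: ff_def)
  have sh: "(\<Sum>k<2*M. [:c (k+1):] * y ^ (2*k+2)) = (\<Sum>k<2*M. [:c k:] * y ^ (2*k))"
  proof -
    have "(\<Sum>k<Suc (2*M). [:c k:] * y ^ (2*k)) = [:c 0:] * y^(2*0) + (\<Sum>k<2*M. [:c (Suc k):] * y ^ (2*Suc k))"
      by (rule sum.lessThan_Suc_shift)
    moreover have "(\<Sum>k<Suc (2*M). [:c k:] * y ^ (2*k)) = (\<Sum>k<2*M. [:c k:] * y ^ (2*k))"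
      by (simp add: c_def cc_2M)
    ultimately show ?thesis by (simp add: c_def cc_0)
  qed
  have R: "(\<Sum>j<2*(2*M). [:cc (2*M) (j+1):] * y ^ j)
      = (\<Sum>k<2*M. [:c k + c (k+1):] * y ^ (2*k)) + (\<Sum>k<2*M. var_t * y * ([:c (k+1):] * y^(2*k)))"
    unfolding sum_even_odd[where L="2*M"]
  proof (intro arg_cong2[where f="(+)"] sum.cong refl)
    fix k show "[:cc (2*M) (2*k+1):] * y ^ (2*k) = [:c k + c (k+1):] * y ^ (2*k)"
      using cc_odd[of M k] by (simp add: c_def)
  next
    fix k
    have "cc (2*M) (2*k+1+1) = cc (2*M) (2*(k+1))" by (metis add.assoc one_add_one distrib_left mult_1_right)
    also have "\<dots> = [:0,1:] * c (k+1)" by (simp only: cc_even c_def)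
    finally have cx: "cc (2*M) (2*k+1+1) = [:0,1:] * c (k+1)" .
    show "[:cc (2*M) (2*k+1+1):] * y ^ (2*k+1) = var_t * y * ([:c (k+1):] * y^(2*k))"
    proof -
      have "[:cc (2*M) (2*k+1+1):] * y ^ (2*k+1) = [:c (k+1):] * (var_t * y ^ (2*k+1))"
        unfolding cx by (rule vt2)
      also have "\<dots> = var_t * y * ([:c (k+1):] * y^(2*k))"
        by (simp only: power_add power_one_right ac_simps)
      finally show ?thesis .
    qed
  qed
  have "(1 + var_t * y + y^2) * (\<Sum>k<2*M. [:c (k+1):] * y ^ (2*k))
     = (\<Sum>k<2*M. [:c (k+1):] * y ^ (2*k)) + (\<Sum>k<2*M. var_t * y * ([:c (k+1):] * y^(2*k)))
       + (\<Sum>k<2*M. [:c (k+1):] * y ^ (2*k+2))"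
  proof -
    have e: "\<And>S::int poly poly. (1 + var_t * y + y^2) * S = S + var_t * y * S + y^2 * S"
      by (simp add: distrib_right)
    have f: "\<And>k. y^2 * ([:c (k+1):] * y ^ (2*k)) = [:c (k+1):] * y ^ (2*k+2)"
      by (simp only: power_add ac_simps)
    show ?thesis unfolding e sum_distrib_left f by (simp only: sum.distrib)
  qed
  also have "\<dots> = (\<Sum>j<2*(2*M). [:cc (2*M) (j+1):] * y ^ j)"
  proof -
    have p: "\<And>a b::int poly. [:a + b:] = [:a:] + [:b:]" by simp
    show ?thesis unfolding R sh p distrib_right sum.distrib by (simp only: ac_simps)
  qed
  finally show ?case using L M2 by simp
qed

theorem theorem3p2:
  fixes n :: nat
  shows "var_x * (\<Prod>i = 0..n. 1 + var_t * var_x ^ (2 ^ i) + var_x ^ (2 ^ (i + 1)))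
       = (\<Sum>i = 1..2 ^ (n + 1).
            ([:stern_poly i:] + [:stern_poly (2 ^ (n + 1) - i):] * var_x ^ (2 ^ (n + 1)))
              * var_x ^ i)"
proof -
  define M :: nat where "M = 2^(n+1)"
  have "var_x * (\<Prod>i = 0..n. 1 + var_t * var_x ^ (2 ^ i) + var_x ^ (2 ^ (i + 1)))
     = var_x * (\<Sum>j<2*M. [:cc M (j+1):] * var_x ^ j)"
    using main[where y=var_x and n=n] by (simp add: ff_def M_def)
  also have "\<dots> = (\<Sum>j<M+M. [:cc M (j+1):] * var_x ^ Suc j)"
    by (simp add: sum_distrib_left algebra_simps mult_2_right)
  also have "\<dots> = (\<Sum>j<M. [:cc M (j+1):] * var_x ^ Suc j) + (\<Sum>j<M. [:cc M (M+j+1):] * var_x ^ Suc (M+j))"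
    by (simp add: sum_add_split)
  also have "\<dots> = (\<Sum>j<M. ([:stern_poly (Suc j):] + [:stern_poly (M - Suc j):] * var_x ^ M) * var_x ^ Suc j)"
  proof -
    have "\<And>j. j < M \<Longrightarrow> cc M (j+1) = stern_poly (Suc j)" "\<And>j. j < M \<Longrightarrow> cc M (M+j+1) = stern_poly (M - Suc j)"
      by (auto simp: cc_def min_def)
    then show ?thesis
      by (simp add: sum.distrib[symmetric] algebra_simps power_add)
  qed
  also have "\<dots> = (\<Sum>i = 1..M. ([:stern_poly i:] + [:stern_poly (M - i):] * var_x ^ M) * var_x ^ i)"
    by (rule sum_1_shift[symmetric])
  finally show ?thesis by (simp add: M_def)
qed

end
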